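(* Let $n$ and $k$ be positive integers with $k\ge2$ and $n\ge2k+1$. Then $B_2(n,k,k+1;3)\ge 2^{n-2k+1}$.
   Context: For a prime power $q$, $\mathcal{G}_q(n,k)$ denotes the set of all $k$-dimensional subspaces of $\mathbb{F}_q^n$. An $\alpha$-$(n,k,\delta)_q^c$ covering Grassmannian code is a subset $\mathcal{C}\subseteq\mathcal{G}_q(n,k)$ (no repeated codewords) such that every set of $\alpha$ distinct codewords of $\mathcal{C}$ spans a subspace of $\mathbb{F}_q^n$ of dimension at least $k+\delta$. $B_q(n,k,\delta;\alpha)$ denotes the maximum size of an $\alpha$-$(n,k,\delta)_q^c$ code. *)

theory Defs
  imports Main "HOL.Vector_Spaces" "HOL-Library.Z2" "HOL-Library.Function_Algebras"
begin

text \<open>Vectors of F^n are represented as functions nat => F vanishing outside {0..<n}.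
  Scalar multiplication is pointwise.\<close>

definition fscale :: "'a::field \<Rightarrow> (nat \<Rightarrow> 'a) \<Rightarrow> (nat \<Rightarrow> 'a)" where
  "fscale c v = (\<lambda>i. c * v i)"

definition Fvecs :: "nat \<Rightarrow> (nat \<Rightarrow> 'a::field) set" where
  "Fvecs n = {v. \<forall>i\<ge>n. v i = 0}"

abbreviation fspan :: "(nat \<Rightarrow> 'a::field) set \<Rightarrow> (nat \<Rightarrow> 'a) set" where
  "fspan S \<equiv> module.span fscale S"

abbreviation fdim :: "(nat \<Rightarrow> 'a::field) set \<Rightarrow> nat" where
  "fdim S \<equiv> vector_space.dim fscale S"

definition Grassmannian :: "'a::field itself \<Rightarrow> nat \<Rightarrow> nat \<Rightarrow> (nat \<Rightarrow> 'a) set set" where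
  "Grassmannian _ n k = {V. V \<subseteq> Fvecs n \<and> module.subspace fscale V \<and> fdim V = k}"

definition covering_code :: "nat \<Rightarrow> nat \<Rightarrow> nat \<Rightarrow> nat \<Rightarrow> (nat \<Rightarrow> 'a::field) set set \<Rightarrow> bool" where
  "covering_code alpha n k delta C \<longleftrightarrow>
     C \<subseteq> Grassmannian TYPE('a) n k \<and>
     (\<forall>A. A \<subseteq> C \<and> card A = alpha \<longrightarrow> fdim (fspan (\<Union>A)) \<ge> k + delta)"

definition B_code :: "'a::field itself \<Rightarrow> nat \<Rightarrow> nat \<Rightarrow> nat \<Rightarrow> nat \<Rightarrow> nat" where
  "B_code _ n k delta alpha =
     Max {card C | C :: (nat \<Rightarrow> 'a) set set. covering_code alpha n k delta C}"

abbreviation B2 :: "nat \<Rightarrow> nat \<Rightarrow> nat \<Rightarrow> nat \<Rightarrow> nat" where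
  "B2 n k delta alpha \<equiv> B_code TYPE(bit) n k delta alpha"

end

theory Submission
  imports Defs
begin


lemma fscale_vs: "vector_space (fscale :: 'a::field \<Rightarrow> (nat \<Rightarrow> 'a) \<Rightarrow> _)"
  by unfold_locales (auto simp: fscale_def fun_eq_iff algebra_simps)

interpretation V: vector_space "fscale :: bit \<Rightarrow> (nat \<Rightarrow> bit) \<Rightarrow> _"
  by (rule fscale_vs)

lemma sum_fun_apply: "(\<Sum>i\<in>I. f i) (t::nat) = (\<Sum>i\<in>I. f i t)"
  for f :: "'b \<Rightarrow> nat \<Rightarrow> bit"
  by (induction I rule: infinite_finite_induct) auto

definition bot :: "(nat \<Rightarrow> bit) \<Rightarrow> nat" where
  "bot v = (LEAST t. v t = 1)"

lemma bot_eq: "v b = 1 \<Longrightarrow> (\<And>t. t < b \<Longrightarrow> v t = 0) \<Longrightarrow> bot v = b"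
proof -
  assume a: "v b = 1" "\<And>t. t < b \<Longrightarrow> v t = 0"
  show "bot v = b" unfolding bot_def
  proof (rule Least_equality)
    show "v b = 1" by (rule a(1))
  next
    fix y assume "v y = 1"
    then show "b \<le> y" using a(2)[of y] by (cases "y < b") auto
  qed
qed

lemma bot_prop: "v t = 1 \<Longrightarrow> v (bot v) = 1 \<and> (\<forall>s<bot v. v s = 0)"
proof -
  assume a: "v t = 1"
  then have "v (bot v) = 1" unfolding bot_def by (rule LeastI)
  moreover have "v s = 0" if "s < bot v" for s
    using not_less_Least[OF that[unfolded bot_def]] by simp
  ultimately show ?thesis by blast
qed

lemma indep_bot:
  assumes fin: "finite B" and nz: "\<forall>v\<in>B. \<exists>t. v t = 1" and inj: "inj_on bot B"
  shows "V.independent B"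
proof -
  have "\<forall>S\<subseteq>B. finite S \<longrightarrow> (\<forall>u. (\<Sum>v\<in>S. fscale (u v) v) = 0 \<longrightarrow> (\<forall>v\<in>S. u v = 0))"
  proof (intro allI impI ballI)
    fix S u v assume SB: "S \<subseteq> B" and fS: "finite S" and sum0: "(\<Sum>v\<in>S. fscale (u v) v) = 0" and vS: "v \<in> S"
    show "u v = 0"
    proof (rule ccontr)
      assume "u v \<noteq> 0"
      define T where "T = {w\<in>S. u w = 1}"
      have vT: "v \<in> T" using \<open>u v \<noteq> 0\<close> vS by (auto simp: T_def)
      have fT: "finite T" using fS by (auto simp: T_def)
      define b where "b = Min (bot ` T)"
      have "b \<in> bot ` T" unfolding b_def using fT vT by (intro Min_in) auto
      then obtain w where wT: "w \<in> T" and bw: "bot w = b" by auto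
      have bmin: "\<And>x. x \<in> T \<Longrightarrow> b \<le> bot x" unfolding b_def using fT by auto
      have "w \<in> B" using wT SB by (auto simp: T_def)
      then obtain t0 where "w t0 = 1" using nz by blast
      then have wprop: "w b = 1" using bot_prop bw by blast
      have "(\<Sum>x\<in>S. fscale (u x) x) b = (\<Sum>x\<in>S. u x * x b)"
        by (simp add: sum_fun_apply fscale_def)
      also have "\<dots> = u w * w b"
      proof (rule sum.remove[THEN trans])
        show "finite S" by fact
        show "w \<in> S" using wT by (auto simp: T_def)
        have "(\<Sum>x\<in>S - {w}. u x * x b) = 0"
        proof (rule sum.neutral, rule ballI)
          fix x assume x: "x \<in> S - {w}"
          show "u x * x b = 0"
          proof (cases "u x = 1")
            case True
            then have xT: "x \<in> T" using x by (auto simp: T_def)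
            have "bot x \<noteq> b" using inj xT wT x bw SB unfolding inj_on_def T_def by blast
            then have "b < bot x" using bmin[OF xT] by auto
            moreover obtain t where "x t = 1" using nz x SB by blast
            ultimately have "x b = 0" using bot_prop by blast
            then show ?thesis by simp
          qed simp
        qed
        then show "u w * w b + (\<Sum>x\<in>S - {w}. u x * x b) = u w * w b" by simp
      qed
      also have "\<dots> = 1" using wT wprop by (simp add: T_def)
      finally show False using sum0 by simp
    qed
  qed
  then show ?thesis using V.independent_explicit_finite_subsets by blast
qed

lemma dim_lower:
  assumes "finite W" "V.independent B" "B \<subseteq> V.span S" "S \<subseteq> V.span W"
  shows "card B \<le> V.dim S"
proof -
  obtain A where A: "A \<subseteq> S" "V.independent A" "S \<subseteq> V.span A" "card A = V.dim S"
    by (rule V.basis_exists)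
  have "A \<subseteq> V.span W" using A assms by blast
  then have fA: "finite A" using V.independent_span_bound[OF assms(1) A(2)] by blast
  have "B \<subseteq> V.span A" using assms(3) A(3) by (metis V.span_mono V.span_span order_trans)
  then show ?thesis using V.independent_span_bound[OF fA assms(2)] A(4) by simp
qed

lemma finite_Fvecs: "finite (Fvecs n :: (nat \<Rightarrow> bit) set)"
proof -
  have "Fvecs n \<subseteq> {f :: nat \<Rightarrow> bit. \<forall>x. (x \<in> {..<n} \<longrightarrow> f x \<in> {0,1}) \<and> (x \<notin> {..<n} \<longrightarrow> f x = 0)}"
    by (auto simp: Fvecs_def)
  moreover have "finite \<dots>" by (rule finite_set_of_finite_funs) auto
  ultimately show ?thesis by (rule finite_subset)
qed

lemma subspace_Fvecs: "V.subspace (Fvecs n)"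
  by (auto simp: V.subspace_def Fvecs_def fscale_def)



definition bv :: "nat \<Rightarrow> nat set \<Rightarrow> nat \<Rightarrow> nat \<Rightarrow> bit" where
  "bv k X i = (\<lambda>t. if t = i \<or> (k + i \<le> t \<and> t - (k+i) \<in> X) then 1 else 0)"

definition Dv :: "nat \<Rightarrow> nat \<Rightarrow> nat set \<Rightarrow> nat \<Rightarrow> bit" where
  "Dv k i W = (\<lambda>t. if k + i \<le> t \<and> t - (k+i) \<in> W then 1 else 0)"

definition Cw :: "nat \<Rightarrow> nat set \<Rightarrow> (nat \<Rightarrow> bit) set" where
  "Cw k X = V.span (bv k X ` {..<k})"

lemma bv_add: "i < k \<Longrightarrow> bv k P i + bv k Q i = Dv k i ((P - Q) \<union> (Q - P))"
proof (rule ext)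
  fix t assume "i < k"
  show "(bv k P i + bv k Q i) t = Dv k i ((P - Q) \<union> (Q - P)) t"
  proof (cases "t = i")
    case True then show ?thesis using \<open>i<k\<close> by (simp add: bv_def Dv_def)
  next
    case False then show ?thesis
      by (cases "k + i \<le> t"; cases "t - (k+i) \<in> P"; cases "t - (k+i) \<in> Q") (simp_all add: bv_def Dv_def)
  qed
qed
lemma bot_bv: "i < k \<Longrightarrow> bot (bv k X i) = i"
  by (rule bot_eq) (auto simp: bv_def)

lemma bv_nz: "bv k X i i = 1"
  by (simp add: bv_def)

lemma bot_Dv: "finite W \<Longrightarrow> W \<noteq> {} \<Longrightarrow> bot (Dv k i W) = k + i + Min W"
proof (rule bot_eq)
  fix t assume "finite W" "W \<noteq> {}" "t < k + i + Min W"
  show "Dv k i W t = 0"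
  proof (rule ccontr)
    assume "Dv k i W t \<noteq> 0"
    then have h: "k+i \<le> t" "t-(k+i) \<in> W" by (auto simp: Dv_def split: if_splits)
    then have "Min W \<le> t-(k+i)" using \<open>finite W\<close> by simp
    then show False using h \<open>t < k + i + Min W\<close> by linarith
  qed
qed (auto simp: Dv_def)

lemma Dv_nz: "finite W \<Longrightarrow> W \<noteq> {} \<Longrightarrow> Dv k i W (k + i + Min W) = 1"
  by (simp add: Dv_def)

lemma bv_indep: "V.independent (bv k X ` {..<k})"
  by (rule indep_bot) (auto intro: bv_nz simp: inj_on_def bot_bv)

lemma bv_inj: "inj_on (bv k X) {..<k}"
  by (auto simp: inj_on_def) (metis bot_bv)

lemma dim_Cw: "V.dim (Cw k X) = k"
  unfolding Cw_def using V.dim_span_eq_card_independent[OF bv_indep] card_image[OF bv_inj] by simp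

lemma Cw_Fvecs: "X \<subseteq> {..<m} \<Longrightarrow> 0 < m \<Longrightarrow> m + 2*k \<le> n + 1 \<Longrightarrow> Cw k X \<subseteq> Fvecs n"
  unfolding Cw_def
proof (rule V.span_minimal[OF _ subspace_Fvecs])
  assume a: "X \<subseteq> {..<m}" "0 < m" "m + 2*k \<le> n + 1"
  show "bv k X ` {..<k} \<subseteq> Fvecs n"
  proof (clarsimp simp: Fvecs_def)
    fix i t assume it: "i < k" "n \<le> t"
    have "t \<noteq> i" using it a by linarith
    moreover have "\<not> (k + i \<le> t \<and> t - (k+i) \<in> X)"
    proof
      assume h: "k + i \<le> t \<and> t - (k+i) \<in> X"
      then have "t - (k+i) < m" using a by auto
      then show False using h it a by linarith
    qed
    ultimately show "bv k X i t = 0" by (simp add: bv_def)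
  qed
qed

lemma Cw_inj:
  assumes "0 < k" "Cw k X = Cw k Y" shows "X = Y"
proof -
  define SY where "SY = {v. \<forall>t. v t = (\<Sum>i<k. v i * bv k Y i t)}"
  have sub: "V.subspace SY"
    unfolding V.subspace_def
  proof (intro conjI ballI allI)
    show "0 \<in> SY" unfolding SY_def by simp
  next
    fix x y assume xS: "x \<in> SY" and yS: "y \<in> SY"
    have hx: "x t = (\<Sum>i<k. x i * bv k Y i t)" for t
      using xS unfolding SY_def by blast
    have hy: "y t = (\<Sum>i<k. y i * bv k Y i t)" for t
      using yS unfolding SY_def by blast
    have "(x + y) t = (\<Sum>i<k. (x + y) i * bv k Y i t)" for t
    proof -
      have "(x + y) t = x t + y t" by (simp only: plus_fun_apply)
      also have "\<dots> = (\<Sum>i<k. x i * bv k Y i t) + (\<Sum>i<k. y i * bv k Y i t)"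
        by (simp only: hx[of t] hy[of t])
      also have "\<dots> = (\<Sum>i<k. x i * bv k Y i t + y i * bv k Y i t)"
        by (rule sum.distrib[symmetric])
      also have "\<dots> = (\<Sum>i<k. (x + y) i * bv k Y i t)"
        by (simp only: plus_fun_apply distrib_right)
      finally show ?thesis .
    qed
    then show "x + y \<in> SY" unfolding SY_def by blast
  next
    fix c :: bit and x assume "x \<in> SY"
    then have hx: "x t = (\<Sum>i<k. x i * bv k Y i t)" for t
      unfolding SY_def by blast
    have "fscale c x t = (\<Sum>i<k. fscale c x i * bv k Y i t)" for t
    proof -
      have "fscale c x t = c * x t" by (simp only: fscale_def)
      also have "\<dots> = c * (\<Sum>i<k. x i * bv k Y i t)" by (simp only: hx[of t])
      also have "\<dots> = (\<Sum>i<k. c * (x i * bv k Y i t))" by (rule sum_distrib_left)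
      also have "\<dots> = (\<Sum>i<k. fscale c x i * bv k Y i t)" by (simp only: fscale_def mult.assoc)
      finally show ?thesis .
    qed
    then show "fscale c x \<in> SY" unfolding SY_def by blast
  qed
  have "bv k Y j \<in> SY" if "j < k" for j
  proof -
    have "(\<Sum>i<k. bv k Y j i * bv k Y i t) = bv k Y j t" for t
    proof -
      have e: "i < k \<Longrightarrow> bv k Y j i = (if i = j then 1 else 0)" for i by (simp add: bv_def)
      have "(\<Sum>i<k. bv k Y j i * bv k Y i t) = (\<Sum>i<k. if i = j then bv k Y i t else 0)"
        by (rule sum.cong) (simp_all add: e)
      also have "\<dots> = bv k Y j t" using that by simp
      finally show ?thesis .
    qed
    then show ?thesis unfolding SY_def mem_Collect_eq by metis
  qed
  then have "Cw k Y \<subseteq> SY" unfolding Cw_def by (intro V.span_minimal[OF _ sub]) auto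
  moreover have "bv k X 0 \<in> Cw k X" unfolding Cw_def using assms(1) by (intro V.span_base) auto
  ultimately have "bv k X 0 \<in> SY" using assms by auto
  then have eq: "bv k X 0 t = (\<Sum>i<k. bv k X 0 i * bv k Y i t)" for t unfolding SY_def by blast
  have sm: "(\<Sum>i<k. bv k X 0 i * bv k Y i t) = bv k Y 0 t" for t
  proof -
    have e: "i < k \<Longrightarrow> bv k X 0 i = (if i = 0 then 1 else 0)" for i by (simp add: bv_def)
    have "(\<Sum>i<k. bv k X 0 i * bv k Y i t) = (\<Sum>i<k. if i = 0 then bv k Y i t else 0)"
      by (rule sum.cong) (simp_all add: e)
    also have "\<dots> = bv k Y 0 t" using assms(1) by simp
    finally show ?thesis .
  qed
  have "bv k X 0 (k + s) = bv k Y 0 (k + s)" for s using eq[of "k+s"] sm[of "k+s"] by (rule trans)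
  moreover have "bv k Z 0 (k + s) = (if s \<in> Z then 1 else 0)" for Z s
    using assms(1) by (simp add: bv_def)
  ultimately have h: "(if s \<in> X then 1 else 0 :: bit) = (if s \<in> Y then 1 else 0)" for s by metis
  have "(s \<in> X) = (s \<in> Y)" for s using h[of s] by (cases "s \<in> X"; cases "s \<in> Y") simp_all
  then show ?thesis by auto
qed


lemma choose_j:
  assumes "0 < k" "(a::nat) \<noteq> b"
  shows "\<exists>j<k. k + j + a \<notin> {k + b..<k + b + k}"
proof (cases "a < b")
  case True then show ?thesis using assms by (intro exI[of _ 0]) auto
next
  case False then show ?thesis using assms by (intro exI[of _ "k - 1"]) auto
qed

lemma triple_dim:
  assumes k: "0 < k" and fin: "finite X" "finite Y" "finite Z"
    and d: "X \<noteq> Y" "Y \<noteq> Z" "X \<noteq> Z"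
  shows "2 * k + 1 \<le> V.dim (Cw k X \<union> Cw k Y \<union> Cw k Z)"
proof -
  define S where "S = Cw k X \<union> Cw k Y \<union> Cw k Z"
  define W1 where "W1 = (X - Y) \<union> (Y - X)"
  have W1: "finite W1" "W1 \<noteq> {}" using fin d by (auto simp: W1_def)
  define \<mu> where "\<mu> = Min W1"
  have inS: "bv k P i \<in> V.span S" if "P \<in> {X, Y, Z}" "i < k" for P i
  proof -
    have "bv k P i \<in> Cw k P" unfolding Cw_def using that by (intro V.span_base) auto
    then have "bv k P i \<in> S" using that by (auto simp: S_def)
    then show ?thesis by (rule V.span_base)
  qed
  have DinS: "Dv k i ((P - Q) \<union> (Q - P)) \<in> V.span S" if "P \<in> {X, Y, Z}" "Q \<in> {X, Y, Z}" "i < k" for P Q i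
    using V.span_add[OF inS[of P i] inS[of Q i]] that bv_add[of i k P Q] by simp
  obtain W' where W': "finite W'" "W' \<noteq> {}" "Min W' \<noteq> \<mu>"
    and W'S: "\<And>i. i < k \<Longrightarrow> Dv k i W' \<in> V.span S"
  proof (cases "Min ((X - Z) \<union> (Z - X)) = \<mu>")
    case False
    show ?thesis
      by (rule that[of "(X - Z) \<union> (Z - X)"]) (use fin d False DinS in auto)
  next
    case True
    define W2 where "W2 = (X - Z) \<union> (Z - X)"
    have W2: "finite W2" "W2 \<noteq> {}" using fin d by (auto simp: W2_def)
    have "\<mu> \<in> W1" unfolding \<mu>_def using W1 by (intro Min_in)
    moreover have "Min W2 \<in> W2" using W2 by (intro Min_in)
    then have "\<mu> \<in> W2" using True by (simp add: W2_def)
    ultimately have "\<mu> \<in> W1" "\<mu> \<in> W2" by auto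
    then have nin: "\<mu> \<notin> (Y - Z) \<union> (Z - Y)" by (auto simp: W1_def W2_def)
    have ne: "(Y - Z) \<union> (Z - Y) \<noteq> {}" using d by auto
    have "Min ((Y - Z) \<union> (Z - Y)) \<in> (Y - Z) \<union> (Z - Y)"
      using fin ne by (intro Min_in) auto
    then have "Min ((Y - Z) \<union> (Z - Y)) \<noteq> \<mu>" using nin by metis
    then show ?thesis
      by (rule that[of "(Y - Z) \<union> (Z - Y)", rotated 2]) (use fin ne DinS in auto)
  qed
  obtain j0 where j0: "j0 < k" "k + j0 + Min W' \<notin> {k + \<mu>..<k + \<mu> + k}"
    using choose_j[OF k W'(3)] by blast
  define G where "G j = (if j < k then bv k X j else if j < 2*k then Dv k (j - k) W1 else Dv k j0 W')" for j
  define \<beta> where "\<beta> j = (if j < k then j else if j < 2*k then k + (j - k) + \<mu> else k + j0 + Min W')" for j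
  have botG: "bot (G j) = \<beta> j" for j
    using bot_bv W1 W' unfolding G_def \<beta>_def \<mu>_def by (auto simp: bot_Dv)
  have nzG: "\<exists>t. G j t = 1" for j
    unfolding G_def by (metis bv_nz Dv_nz W1(1,2) W'(1,2))
  have injb: "inj_on \<beta> {..<2*k+1}"
  proof (rule inj_onI)
    fix x y assume "x \<in> {..<2*k+1}" "y \<in> {..<2*k+1}" "\<beta> x = \<beta> y"
    then show "x = y" using j0 unfolding \<beta>_def by (auto split: if_splits)
  qed
  have injbG: "inj_on (bot \<circ> G) {..<2*k+1}"
    using injb by (simp add: comp_def botG)
  have injG: "inj_on G {..<2*k+1}" using injbG by (rule inj_on_imageI2)
  have injbot: "inj_on bot (G ` {..<2*k+1})"
  proof (rule inj_onI)
    fix a b assume "a \<in> G ` {..<2*k+1}" "b \<in> G ` {..<2*k+1}" "bot a = bot b"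
    then show "a = b" using injbG unfolding inj_on_def by auto
  qed
  have ind: "V.independent (G ` {..<2*k+1})"
    by (rule indep_bot) (use nzG injbot in auto)
  have card: "card (G ` {..<2*k+1}) = 2*k+1" using card_image[OF injG] by simp
  have sub: "G ` {..<2*k+1} \<subseteq> V.span S"
  proof clarify
    fix j assume "j < 2*k+1"
    then show "G j \<in> V.span S" unfolding G_def W1_def using inS DinS W'S j0 by auto
  qed
  define W where "W = bv k X ` {..<k} \<union> bv k Y ` {..<k} \<union> bv k Z ` {..<k}"
  have "S \<subseteq> V.span W" unfolding S_def W_def Cw_def
    by (intro Un_least V.span_mono) auto
  then have "card (G ` {..<2*k+1}) \<le> V.dim S"
    by (intro dim_lower[OF _ ind sub]) (auto simp: W_def)
  then show ?thesis using card by (simp add: S_def)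
qed

theorem mainTheorem8:
  fixes n k :: nat
  assumes "0 < n" and "2 \<le> k" and "2 * k + 1 \<le> n"
  shows "B2 n k (k + 1) 3 \<ge> 2 ^ (n - 2 * k + 1)"
proof -
  define m where "m = n - 2 * k + 1"
  define C where "C = Cw k ` Pow {..<m}"
  have k0: "0 < k" using assms by simp
  have m0: "0 < m" "m + 2*k \<le> n + 1" using assms by (auto simp: m_def)
  have injC: "inj_on (Cw k) (Pow {..<m})"
    using Cw_inj[OF k0] by (auto simp: inj_on_def)
  have cardC: "card C = 2 ^ m" unfolding C_def
    using card_image[OF injC] by (simp add: card_Pow)
  have code: "covering_code 3 n k (k + 1) C"
    unfolding covering_code_def
  proof (intro conjI allI impI)
    show "C \<subseteq> Grassmannian TYPE(bit) n k"
    proof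
      fix U assume "U \<in> C"
      then obtain X where X: "X \<subseteq> {..<m}" "U = Cw k X" unfolding C_def by blast
      have "V.subspace (Cw k X)" unfolding Cw_def by (rule V.subspace_span)
      then show "U \<in> Grassmannian TYPE(bit) n k"
        unfolding Grassmannian_def using Cw_Fvecs[OF X(1) m0] dim_Cw[of k X] X(2) by blast
    qed
  next
    fix A assume A: "A \<subseteq> C \<and> card A = 3"
    then obtain a b c where abc: "A = {a, b, c}" "a \<noteq> b" "b \<noteq> c" "a \<noteq> c"
      by (auto simp: card_3_iff)
    have aC: "a \<in> C" and bC: "b \<in> C" and cC: "c \<in> C" using A unfolding abc(1) by blast+
    obtain X where X: "X \<subseteq> {..<m}" "a = Cw k X" using aC unfolding C_def by blast
    obtain Y where Y: "Y \<subseteq> {..<m}" "b = Cw k Y" using bC unfolding C_def by blast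
    obtain Z where Z: "Z \<subseteq> {..<m}" "c = Cw k Z" using cC unfolding C_def by blast
    note XYZ = X(1) Y(1) Z(1) X(2) Y(2) Z(2)
    have fin: "finite X" "finite Y" "finite Z" using XYZ by (auto intro: finite_subset)
    have d: "X \<noteq> Y" "Y \<noteq> Z" "X \<noteq> Z" using abc XYZ by auto
    have "\<Union>A = Cw k X \<union> Cw k Y \<union> Cw k Z" unfolding abc(1) XYZ(4-6) by blast
    then show "k + (k + 1) \<le> fdim (fspan (\<Union>A))"
      using triple_dim[OF k0 fin d] by (simp add: V.dim_span)
  qed
  have fin: "finite {card C |C :: (nat \<Rightarrow> bit) set set. covering_code 3 n k (k + 1) C}"
  proof (rule finite_subset)
    show "{card C |C :: (nat \<Rightarrow> bit) set set. covering_code 3 n k (k + 1) C} \<subseteq> {..card (Pow (Fvecs n :: (nat \<Rightarrow> bit) set))}"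
    proof
      fix c assume "c \<in> {card C |C :: (nat \<Rightarrow> bit) set set. covering_code 3 n k (k + 1) C}"
      then obtain D :: "(nat \<Rightarrow> bit) set set" where D: "c = card D" "covering_code 3 n k (k + 1) D"
        by blast
      then have "D \<subseteq> Pow (Fvecs n)" by (auto simp: covering_code_def Grassmannian_def)
      then have "card D \<le> card (Pow (Fvecs n :: (nat \<Rightarrow> bit) set))"
        using finite_Fvecs by (intro card_mono) auto
      then show "c \<in> {..card (Pow (Fvecs n :: (nat \<Rightarrow> bit) set))}" using D by simp
    qed
  qed simp
  have "card C \<le> B2 n k (k + 1) 3"
    unfolding B_code_def using code fin by (intro Max_ge) auto
  then show ?thesis using cardC by (simp add: m_def)
qed

end
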